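(* Let $G$ be a graph and let $H$ be a triangle-free subgraph of $G$ such that every maximal clique of $H$ is a maximal clique of $G$. Then $p(G) \ge p(H)$.
   Context: All graphs are finite and simple. For an acyclic digraph $D$, the phylogeny graph $P(D)$ is the graph on $V(D)$ in which distinct vertices $u,v$ are adjacent if and only if $(u,v)\in A(D)$, or $(v,u)\in A(D)$, or there is a vertex $w$ with $(u,w),(v,w)\in A(D)$. A phylogeny digraph for a graph $G$ is an acyclic digraph $D$ such that $G$ is an induced subgraph of $P(D)$ and $D$ has no arc from a vertex of $V(D)\setminus V(G)$ to a vertex of $V(G)$. The phylogeny number $p(G)$ is the minimum of $|V(D)\setminus V(G)|$ over all phylogeny digraphs $D$ for $G$. *)

theory Defs
  imports Main
begin

definition graph :: "'a set \<Rightarrow> 'a set set \<Rightarrow> bool" where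
  "graph V E \<longleftrightarrow> finite V \<and> (\<forall>e\<in>E. \<exists>u v. e = {u, v} \<and> u \<noteq> v \<and> u \<in> V \<and> v \<in> V)"

definition subgraph :: "'a set \<Rightarrow> 'a set set \<Rightarrow> 'a set \<Rightarrow> 'a set set \<Rightarrow> bool" where
  "subgraph VH EH VG EG \<longleftrightarrow> graph VH EH \<and> graph VG EG \<and> VH \<subseteq> VG \<and> EH \<subseteq> EG"

definition clique :: "'a set \<Rightarrow> 'a set set \<Rightarrow> 'a set \<Rightarrow> bool" where
  "clique V E K \<longleftrightarrow> K \<subseteq> V \<and> (\<forall>u\<in>K. \<forall>v\<in>K. u \<noteq> v \<longrightarrow> {u, v} \<in> E)"

definition maximal_clique :: "'a set \<Rightarrow> 'a set set \<Rightarrow> 'a set \<Rightarrow> bool" where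
  "maximal_clique V E K \<longleftrightarrow> clique V E K \<and> (\<forall>K'. clique V E K' \<and> K \<subseteq> K' \<longrightarrow> K' = K)"

definition triangle_free :: "'a set \<Rightarrow> 'a set set \<Rightarrow> bool" where
  "triangle_free V E \<longleftrightarrow> \<not> (\<exists>u\<in>V. \<exists>v\<in>V. \<exists>w\<in>V. u \<noteq> v \<and> v \<noteq> w \<and> u \<noteq> w \<and>
       {u, v} \<in> E \<and> {v, w} \<in> E \<and> {u, w} \<in> E)"

definition phylo_adj :: "'b set \<Rightarrow> 'b rel \<Rightarrow> 'b \<Rightarrow> 'b \<Rightarrow> bool" where
  "phylo_adj VD A u v \<longleftrightarrow> u \<noteq> v \<and> u \<in> VD \<and> v \<in> VD \<and>
     ((u, v) \<in> A \<or> (v, u) \<in> A \<or> (\<exists>w\<in>VD. (u, w) \<in> A \<and> (v, w) \<in> A))"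

text \<open>Its vertex set is
  Inl ` V (the vertices of G) together with a finite set Inr ` S of new vertices;
  every finite digraph containing V(G) is isomorphic to one of this form.\<close>
definition phylogeny_digraph :: "'a set \<Rightarrow> 'a set set \<Rightarrow> nat set \<Rightarrow> ('a + nat) rel \<Rightarrow> bool" where
  "phylogeny_digraph V E S A \<longleftrightarrow>
     finite S \<and>
     A \<subseteq> (Inl ` V \<union> Inr ` S) \<times> (Inl ` V \<union> Inr ` S) \<and>
     acyclic A \<and>
     (\<forall>u\<in>V. \<forall>v\<in>V. u \<noteq> v \<longrightarrow>
        ({u, v} \<in> E \<longleftrightarrow> phylo_adj (Inl ` V \<union> Inr ` S) A (Inl u) (Inl v))) \<and>
     (\<forall>x\<in>S. \<forall>v\<in>V. (Inr x, Inl v) \<notin> A)"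

definition phylogeny_number :: "'a set \<Rightarrow> 'a set set \<Rightarrow> nat" where
  "phylogeny_number V E = (LEAST k. \<exists>S A. phylogeny_digraph V E S A \<and> card S = k)"

end

theory Submission
  imports Defs
begin

lemma key:
  assumes sub: "subgraph VH EH VG EG"
    and tf: "triangle_free VH EH"
    and mc: "\<forall>K. maximal_clique VH EH K \<longrightarrow> maximal_clique VG EG K"
    and e: "{a,b} \<in> EH" and c: "c \<in> VG" and ac: "{a,c} \<in> EG" and bc: "{b,c} \<in> EG"
    and ca: "c \<noteq> a" and cb: "c \<noteq> b"
  shows False
proof -
  have gH: "graph VH EH" and gG: "graph VG EG" and VHG: "VH \<subseteq> VG" and EHG: "EH \<subseteq> EG"
    using sub unfolding subgraph_def by auto
  obtain x y where xy: "{a,b} = {x,y}" "x \<noteq> y" "x \<in> VH" "y \<in> VH"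
    using gH e unfolding graph_def by blast
  have ab: "a \<noteq> b" "a \<in> VH" "b \<in> VH" using xy by (auto simp: doubleton_eq_iff)
  have e2: "{b,a} \<in> EH" using e by (metis insert_commute)
  have cl: "clique VH EH {a,b}" using ab e e2 unfolding clique_def by auto
  have "maximal_clique VH EH {a,b}"
    unfolding maximal_clique_def
  proof (intro conjI allI impI cl)
    fix K' assume K': "clique VH EH K' \<and> {a, b} \<subseteq> K'"
    show "K' = {a,b}"
    proof (rule ccontr)
      assume "K' \<noteq> {a,b}"
      then have "\<not> K' \<subseteq> {a,b}" using K' by blast
      then obtain d where d: "d \<in> K'" "d \<noteq> a" "d \<noteq> b" by (auto simp: subset_iff)
      have K'cl: "\<forall>u\<in>K'. \<forall>v\<in>K'. u \<noteq> v \<longrightarrow> {u, v} \<in> EH" "K' \<subseteq> VH"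
        using K' unfolding clique_def by auto
      have abK: "a \<in> K'" "b \<in> K'" using K' by auto
      have ad: "{a,d} \<in> EH" using K'cl(1) abK(1) d(1) d(2) by metis
      have bd: "{b,d} \<in> EH" using K'cl(1) abK(2) d(1) d(3) by metis
      have dV: "d \<in> VH" using K'cl(2) d(1) by (rule subsetD)
      have "\<exists>u\<in>VH. \<exists>v\<in>VH. \<exists>w\<in>VH. u \<noteq> v \<and> v \<noteq> w \<and> u \<noteq> w \<and>
       {u, v} \<in> EH \<and> {v, w} \<in> EH \<and> {u, w} \<in> EH"
        apply (rule bexI[of _ a], rule bexI[of _ b], rule bexI[of _ d])
        using ab dV d e ad bd by simp_all
      then show False using tf unfolding triangle_free_def by (rule notE[rotated])
    qed
  qed
  then have m: "maximal_clique VG EG {a,b}" using mc by blast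
  have eG: "{a,b} \<in> EG" "{b,a} \<in> EG" using e e2 EHG by auto
  have ca': "{c,a} \<in> EG" using ac by (metis insert_commute)
  have cb': "{c,b} \<in> EG" using bc by (metis insert_commute)
  have "clique VG EG {a,b,c}" using ab VHG c ac bc eG ca' cb' unfolding clique_def
    by auto
  moreover have "{a,b} \<subseteq> {a,b,c}" by auto
  ultimately have eq: "{a,b,c} = {a,b}"
    using m[unfolded maximal_clique_def, THEN conjunct2, rule_format] by simp
  have "c \<in> {a,b,c}" by simp
  then have "c \<in> {a,b}" by (simp only: eq)
  then show False using ca cb by simp
qed

lemma acyc_noloop: "acyclic A \<Longrightarrow> (x,x) \<notin> A"
  unfolding acyclic_def by blast

lemma graph_mem: "e \<in> E \<Longrightarrow> graph V E \<Longrightarrow> u \<in> e \<Longrightarrow> u \<in> V"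
proof -
  assume e: "e \<in> E" and g: "graph V E" and u: "u \<in> e"
  obtain a b where "e = {a,b}" "a \<in> V" "b \<in> V" using g e unfolding graph_def by blast
  then show ?thesis using u by auto
qed

lemma pair_eq: "e = {x,y} \<Longrightarrow> u \<in> e \<and> v \<in> e \<Longrightarrow> u \<noteq> v \<Longrightarrow> e = {u,v}"
  by blast

lemma exists_pd:
  assumes g: "graph V E"
  shows "\<exists>S A. phylogeny_digraph V E S A"
proof -
  have fV: "finite V" using g unfolding graph_def by auto
  have "E \<subseteq> Pow V" using g unfolding graph_def by auto
  then have fE: "finite E" using fV by (meson finite_Pow_iff finite_subset)
  obtain f where f: "bij_betw f {0..<card E} E" using ex_bij_betw_nat_finite[OF fE] by blast
  define S where "S = {0..<card E}"
  define A :: "('a + nat) rel" where "A = {p. \<exists>u i. p = (Inl u, Inr i) \<and> i < card E \<and> u \<in> f i}"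
  have Amem: "\<And>p. p \<in> A \<longleftrightarrow> (\<exists>u i. p = (Inl u, Inr i) \<and> i < card E \<and> u \<in> f i)"
    unfolding A_def by simp
  have Amem2: "\<And>x y. (x,y) \<in> A \<longleftrightarrow> (\<exists>u i. x = Inl u \<and> y = Inr i \<and> i < card E \<and> u \<in> f i)"
    using Amem by blast
  have fimg: "\<And>i. i < card E \<Longrightarrow> f i \<in> E" using f unfolding bij_betw_def by auto
  have tr: "trans A" unfolding trans_def Amem2 by blast
  have ac: "acyclic A"
  proof -
    have "\<And>x. (x,x) \<notin> A" unfolding Amem2 by blast
    then show ?thesis unfolding acyclic_def trancl_id[OF tr] by blast
  qed
  have sub: "A \<subseteq> (Inl ` V \<union> Inr ` S) \<times> (Inl ` V \<union> Inr ` S)"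
  proof
    fix p assume "p \<in> A"
    then obtain u i where p: "p = (Inl u, Inr i)" "i < card E" "u \<in> f i" unfolding Amem by blast
    then have "f i \<in> E" using fimg by auto
    then show "p \<in> (Inl ` V \<union> Inr ` S) \<times> (Inl ` V \<union> Inr ` S)" using graph_mem[OF _ g p(3)] p S_def by auto
  qed
  have adj: "\<forall>u\<in>V. \<forall>v\<in>V. u \<noteq> v \<longrightarrow>
        ({u, v} \<in> E \<longleftrightarrow> phylo_adj (Inl ` V \<union> Inr ` S) A (Inl u) (Inl v))"
  proof (intro ballI impI)
    fix u v assume uv: "u \<in> V" "v \<in> V" "u \<noteq> v"
    show "({u, v} \<in> E \<longleftrightarrow> phylo_adj (Inl ` V \<union> Inr ` S) A (Inl u) (Inl v))"
    proof
      assume "{u,v} \<in> E"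
      then have "{u,v} \<in> f ` {0..<card E}" using f unfolding bij_betw_def by simp
      then obtain i where i: "i < card E" "f i = {u,v}" by auto
      then have a1: "(Inl u, Inr i) \<in> A" "(Inl v, Inr i) \<in> A" unfolding Amem2 by auto
      have "Inr i \<in> Inl ` V \<union> Inr ` S" using i S_def by auto
      then show "phylo_adj (Inl ` V \<union> Inr ` S) A (Inl u) (Inl v)"
        unfolding phylo_adj_def using uv a1 by blast
    next
      assume "phylo_adj (Inl ` V \<union> Inr ` S) A (Inl u) (Inl v)"
      then have "(Inl u, Inl v) \<in> A \<or> (Inl v, Inl u) \<in> A \<or> (\<exists>w. (Inl u, w) \<in> A \<and> (Inl v, w) \<in> A)"
        unfolding phylo_adj_def by blast
      then obtain w where w: "(Inl u, w) \<in> A" "(Inl v, w) \<in> A"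
        unfolding Amem2 by blast
      then obtain i where i: "w = Inr i" "i < card E" "u \<in> f i" "v \<in> f i" unfolding Amem2 by blast
      have fi: "f i \<in> E" using fimg i by auto
      then obtain x y where "f i = {x,y}" using g unfolding graph_def by blast
      then have "f i = {u,v}" using i(3,4) uv(3) pair_eq[of "f i" x y u v] by blast
      then show "{u,v} \<in> E" using fi by simp
    qed
  qed
  have no: "\<forall>x\<in>S. \<forall>v\<in>V. (Inr x, Inl v) \<notin> A" unfolding Amem2 by blast
  have "phylogeny_digraph V E S A"
    unfolding phylogeny_digraph_def
  proof (intro conjI)
    show "finite S" unfolding S_def by simp
  qed (fact sub ac adj no)+
  then show ?thesis by blast
qed


definition restr :: "'a set \<Rightarrow> 'a set set \<Rightarrow> 'a set \<Rightarrow> nat set \<Rightarrow> ('a+nat) rel \<Rightarrow> ('a+nat) rel" where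
"restr VH EH VG S A = {p. \<exists>x y. p = (Inl x, Inl y) \<and> p \<in> A \<and> x\<in>VH \<and> y\<in>VH \<and> {x,y}\<in>EH}
   \<union> {p. \<exists>x s. p = (Inl x, Inr s) \<and> p \<in> A \<and> x\<in>VH \<and> s\<in>S \<and> (\<forall>y\<in>VG. (Inl y, Inr s)\<in>A \<and> y\<noteq>x \<longrightarrow> {x,y}\<in>EH)}"

lemma restr_LL: "(Inl x, Inl y) \<in> restr VH EH VG S A \<longleftrightarrow> (Inl x, Inl y) \<in> A \<and> x\<in>VH \<and> y\<in>VH \<and> {x,y}\<in>EH"
  unfolding restr_def by blast

lemma restr_LR: "(Inl x, Inr s) \<in> restr VH EH VG S A \<longleftrightarrow> (Inl x, Inr s) \<in> A \<and> x\<in>VH \<and> s\<in>S \<and> (\<forall>y\<in>VG. (Inl y, Inr s)\<in>A \<and> y\<noteq>x \<longrightarrow> {x,y}\<in>EH)"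
  unfolding restr_def by blast

lemma restr_R: "(Inr s, b) \<notin> restr VH EH VG S A"
  unfolding restr_def by blast

lemma restr_sub: "restr VH EH VG S A \<subseteq> A"
  unfolding restr_def by blast

lemma restrict:
  assumes sub: "subgraph VH EH VG EG"
    and tf: "triangle_free VH EH"
    and mc: "\<forall>K. maximal_clique VH EH K \<longrightarrow> maximal_clique VG EG K"
    and pd: "phylogeny_digraph VG EG S A"
  shows "phylogeny_digraph VH EH S (restr VH EH VG S A)"
proof -
  let ?A' = "restr VH EH VG S A"
  let ?VD = "Inl ` VG \<union> Inr ` S"
  let ?VD' = "Inl ` VH \<union> Inr ` S"
  have VHG: "VH \<subseteq> VG" and EHG: "EH \<subseteq> EG" using sub unfolding subgraph_def by auto
  have fS: "finite S" and AS: "A \<subseteq> ?VD \<times> ?VD" and acA: "acyclic A"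
    and adjG: "\<forall>u\<in>VG. \<forall>v\<in>VG. u \<noteq> v \<longrightarrow> ({u, v} \<in> EG \<longleftrightarrow> phylo_adj ?VD A (Inl u) (Inl v))"
    using pd unfolding phylogeny_digraph_def by auto
  have nl: "\<And>x. (x,x) \<notin> A" using acA by (rule acyc_noloop)
  have keyE: "\<And>a b c. {a,b} \<in> EH \<Longrightarrow> c \<in> VG \<Longrightarrow> {a,c} \<in> EG \<Longrightarrow> {b,c} \<in> EG \<Longrightarrow> c \<noteq> a \<Longrightarrow> c \<noteq> b \<Longrightarrow> False"
    using key[OF sub tf mc] by blast
  have inVG: "\<And>x w. (Inl x, w) \<in> A \<Longrightarrow> x \<in> VG" using AS by auto
  have inVG2: "\<And>x w. (w, Inl x) \<in> A \<Longrightarrow> x \<in> VG" using AS by auto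
  have arcG: "\<And>x y. (Inl x, Inl y) \<in> A \<Longrightarrow> {x,y} \<in> EG"
  proof -
    fix x y assume a: "(Inl x, Inl y) \<in> A"
    have "x \<noteq> y" using a nl by auto
    moreover have "x \<in> VG" "y \<in> VG" using a inVG inVG2 by auto
    moreover have "phylo_adj ?VD A (Inl x) (Inl y)" unfolding phylo_adj_def
      using a \<open>x \<noteq> y\<close> \<open>x \<in> VG\<close> \<open>y \<in> VG\<close> by blast
    ultimately show "{x,y} \<in> EG" using adjG[rule_format, of x y] by simp
  qed
  have cnG: "\<And>x y w. (Inl x, w) \<in> A \<Longrightarrow> (Inl y, w) \<in> A \<Longrightarrow> x \<noteq> y \<Longrightarrow> {x,y} \<in> EG"
  proof -
    fix x y w assume a: "(Inl x, w) \<in> A" "(Inl y, w) \<in> A" "x \<noteq> y"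
    have "x \<in> VG" "y \<in> VG" using a inVG by auto
    moreover have "w \<in> ?VD" using a AS by auto
    moreover have "phylo_adj ?VD A (Inl x) (Inl y)" unfolding phylo_adj_def
      using a \<open>x \<in> VG\<close> \<open>y \<in> VG\<close> \<open>w \<in> ?VD\<close> by blast
    ultimately show "{x,y} \<in> EG" using adjG[rule_format, of x y] a(3) by simp
  qed
  have adj: "\<forall>u\<in>VH. \<forall>v\<in>VH. u \<noteq> v \<longrightarrow> ({u, v} \<in> EH \<longleftrightarrow> phylo_adj ?VD' ?A' (Inl u) (Inl v))"
  proof (intro ballI impI)
    fix u v assume uv: "u \<in> VH" "v \<in> VH" "u \<noteq> v"
    have uvG: "u \<in> VG" "v \<in> VG" using uv VHG by auto
    have mem: "Inl u \<in> ?VD'" "Inl v \<in> ?VD'" using uv by auto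
    show "{u, v} \<in> EH \<longleftrightarrow> phylo_adj ?VD' ?A' (Inl u) (Inl v)"
    proof
      assume e: "{u,v} \<in> EH"
      have e': "{v,u} \<in> EH" using e by (metis insert_commute)
      have "{u,v} \<in> EG" using e EHG by auto
      then have "phylo_adj ?VD A (Inl u) (Inl v)" using adjG[rule_format, OF uvG uv(3)] by simp
      then have cases: "(Inl u, Inl v) \<in> A \<or> (Inl v, Inl u) \<in> A \<or> (\<exists>w. (Inl u, w) \<in> A \<and> (Inl v, w) \<in> A)"
        unfolding phylo_adj_def by blast
      show "phylo_adj ?VD' ?A' (Inl u) (Inl v)"
      proof (cases "(Inl u, Inl v) \<in> A")
        case True
        then have "(Inl u, Inl v) \<in> ?A'" using uv e by (simp add: restr_LL)
        then show ?thesis unfolding phylo_adj_def using mem uv by blast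
      next
        case F1: False
        show ?thesis
        proof (cases "(Inl v, Inl u) \<in> A")
          case True
          then have "(Inl v, Inl u) \<in> ?A'" using uv e' by (simp add: restr_LL)
          then show ?thesis unfolding phylo_adj_def using mem uv by blast
        next
          case False
          then obtain w where w: "(Inl u, w) \<in> A" "(Inl v, w) \<in> A" using cases F1 by blast
          show ?thesis
          proof (cases w)
            case (Inl z)
            have z: "z \<in> VG" using w Inl inVG2 by blast
            have zu: "z \<noteq> u" "z \<noteq> v" using w Inl nl by auto
            have "{u,z} \<in> EG" "{v,z} \<in> EG" using w Inl arcG by auto
            then show ?thesis using keyE[OF e z _ _ zu] by blast
          next
            case (Inr s)
            have s: "s \<in> S" using w Inr AS by auto
            have g1: "\<forall>y\<in>VG. (Inl y, Inr s)\<in>A \<and> y\<noteq>u \<longrightarrow> {u,y}\<in>EH"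
            proof (intro ballI impI)
              fix y assume y: "y \<in> VG" "(Inl y, Inr s)\<in>A \<and> y\<noteq>u"
              show "{u,y} \<in> EH"
              proof (cases "y = v")
                case True then show ?thesis using e by simp
              next
                case False
                have "{u,y} \<in> EG" using cnG[of u "Inr s" y] w Inr y by auto
                moreover have "{v,y} \<in> EG" using cnG[of v "Inr s" y] w Inr y False by auto
                ultimately show ?thesis using keyE[OF e y(1)] y False by blast
              qed
            qed
            have g2: "\<forall>y\<in>VG. (Inl y, Inr s)\<in>A \<and> y\<noteq>v \<longrightarrow> {v,y}\<in>EH"
            proof (intro ballI impI)
              fix y assume y: "y \<in> VG" "(Inl y, Inr s)\<in>A \<and> y\<noteq>v"
              show "{v,y} \<in> EH"
              proof (cases "y = u")
                case True then show ?thesis using e' by simp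
              next
                case False
                have "{u,y} \<in> EG" using cnG[of u "Inr s" y] w Inr y False by auto
                moreover have "{v,y} \<in> EG" using cnG[of v "Inr s" y] w Inr y by auto
                ultimately show ?thesis using keyE[OF e y(1)] y False by blast
              qed
            qed
            have "(Inl u, Inr s) \<in> ?A'" using w Inr uv s g1 by (simp add: restr_LR)
            moreover have "(Inl v, Inr s) \<in> ?A'" using w Inr uv s g2 by (simp add: restr_LR)
            moreover have "Inr s \<in> ?VD'" using s by auto
            ultimately show ?thesis unfolding phylo_adj_def using mem uv by blast
          qed
        qed
      qed
    next
      assume "phylo_adj ?VD' ?A' (Inl u) (Inl v)"
      then have cases: "(Inl u, Inl v) \<in> ?A' \<or> (Inl v, Inl u) \<in> ?A' \<or> (\<exists>w. (Inl u, w) \<in> ?A' \<and> (Inl v, w) \<in> ?A')"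
        unfolding phylo_adj_def by blast
      show "{u,v} \<in> EH"
      proof (cases "(Inl u, Inl v) \<in> ?A'")
        case True then show ?thesis by (simp add: restr_LL)
      next
        case F1: False
        show ?thesis
        proof (cases "(Inl v, Inl u) \<in> ?A'")
          case True then have "{v,u} \<in> EH" by (simp add: restr_LL)
          then show ?thesis by (metis insert_commute)
        next
          case False
          then obtain w where w: "(Inl u, w) \<in> ?A'" "(Inl v, w) \<in> ?A'" using cases F1 by blast
          show ?thesis
          proof (cases w)
            case (Inl z)
            have a1: "(Inl u, Inl z) \<in> A" "{u,z} \<in> EH" using w Inl by (simp_all add: restr_LL)
            have a2: "(Inl v, Inl z) \<in> A" using w Inl by (simp add: restr_LL)
            have z: "z \<in> VG" using a1 inVG2 by blast
            have zn: "z \<noteq> u" "z \<noteq> v" using a1 a2 nl by auto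
            have "{u,v} \<in> EG" using cnG[of u "Inl z" v] a1 a2 uv by auto
            moreover have "{z,v} \<in> EG" using arcG[OF a2] by (metis insert_commute)
            ultimately show ?thesis using keyE[OF a1(2) uvG(2)] zn uv by blast
          next
            case (Inr s)
            have "(\<forall>y\<in>VG. (Inl y, Inr s)\<in>A \<and> y\<noteq>u \<longrightarrow> {u,y}\<in>EH)" using w Inr by (simp add: restr_LR)
            moreover have "(Inl v, Inr s) \<in> A" using w Inr restr_sub by blast
            ultimately show ?thesis using uvG uv by auto
          qed
        qed
      qed
    qed
  qed
  have s1: "?A' \<subseteq> ?VD' \<times> ?VD'"
  proof
    fix p assume p: "p \<in> ?A'"
    then show "p \<in> ?VD' \<times> ?VD'" unfolding restr_def
      by (elim UnE CollectE exE conjE) auto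
  qed
  have s2: "acyclic ?A'" by (rule acyclic_subset[OF acA restr_sub])
  have s3: "\<forall>x\<in>S. \<forall>v\<in>VH. (Inr x, Inl v) \<notin> ?A'" by (simp add: restr_R)
  show ?thesis unfolding phylogeny_digraph_def by (intro conjI fS s1 s2 s3 adj)
qed

theorem mainTheorem3:
  fixes VG VH :: "'a set" and EG EH :: "'a set set"
  assumes "graph VG EG"
    and "subgraph VH EH VG EG"
    and "triangle_free VH EH"
    and "\<forall>K. maximal_clique VH EH K \<longrightarrow> maximal_clique VG EG K"
  shows "phylogeny_number VG EG \<ge> phylogeny_number VH EH"
proof -
  obtain S0 A0 where "phylogeny_digraph VG EG S0 A0" using exists_pd[OF assms(1)] by blast
  then have "\<exists>k. \<exists>S A. phylogeny_digraph VG EG S A \<and> card S = k" by blast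
  then have "\<exists>S A. phylogeny_digraph VG EG S A \<and> card S = phylogeny_number VG EG"
    unfolding phylogeny_number_def by (rule LeastI_ex)
  then obtain S A where pd: "phylogeny_digraph VG EG S A" and c: "card S = phylogeny_number VG EG"
    by blast
  have "phylogeny_digraph VH EH S (restr VH EH VG S A)"
    using restrict[OF assms(2,3,4) pd] .
  then have "\<exists>S' A'. phylogeny_digraph VH EH S' A' \<and> card S' = card S" by blast
  then have "phylogeny_number VH EH \<le> card S"
    unfolding phylogeny_number_def by (rule Least_le[where k="card S"])
  then show ?thesis using c by simp
qed

end
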